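(* There is an absolute constant $A>0$ such that for every integer $n\ge1$ and every real $C>0$ there is a smooth function $\rho_C:\mathbb{R}^n\to\mathbb{R}$ such that: (1) $\rho_C\ge0$; (2) $\int_{\mathbb{R}^n}\rho_C(x)\,dx=1$; (3) for every unit vector $v\in\mathbb{R}^n$ and every integer $k\ge0$, $\int_{\mathbb{R}^n}|D_v^k\rho_C(x)|\,dx\le C^k$; (4) for every $D>0$, $\int_{|x|>D}\rho_C(x)\,dx\le A\left(\frac{n}{CD}\right)^2$.
   Context: $D_v^k$ denotes the $k$-th directional derivative in direction $v$; $|x|$ is the Euclidean norm. *)

theory Defs
  imports "HOL-Analysis.Analysis"
begin

text \<open>Euclidean space R^n is represented by extensional functions nat => real
  supported on {..<n}, i.e. the carrier PiE {..<n} (\<lambda>_. UNIV), with Lebesgue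
  measure the n-fold product of lborel. This allows quantifying over n inside
  the statement (the constant A must not depend on n).\<close>

definition Rn :: "nat \<Rightarrow> (nat \<Rightarrow> real) set" where
  "Rn n = PiE {..<n} (\<lambda>_. UNIV)"

definition lebesgue_n :: "nat \<Rightarrow> (nat \<Rightarrow> real) measure" where
  "lebesgue_n n = PiM {..<n} (\<lambda>_. lborel)"

definition euclid_norm :: "nat \<Rightarrow> (nat \<Rightarrow> real) \<Rightarrow> real" where
  "euclid_norm n x = sqrt (\<Sum>i<n. (x i)\<^sup>2)"

fun pd :: "nat list \<Rightarrow> ((nat \<Rightarrow> real) \<Rightarrow> real) \<Rightarrow> (nat \<Rightarrow> real) \<Rightarrow> real" where
  "pd [] f = f"
| "pd (i # is) f = (\<lambda>x. deriv (\<lambda>t. pd is f (x(i := t))) (x i))"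

definition smooth_n :: "nat \<Rightarrow> ((nat \<Rightarrow> real) \<Rightarrow> real) \<Rightarrow> bool" where
  "smooth_n n f \<longleftrightarrow>
     (\<forall>is. set is \<subseteq> {..<n} \<longrightarrow>
        continuous_on (Rn n) (pd is f) \<and>
        (\<forall>i<n. \<forall>x\<in>Rn n.
           ((\<lambda>t. pd is f (x(i := t))) has_real_derivative pd (i # is) f x) (at (x i))))"

definition dir_deriv :: "(nat \<Rightarrow> real) \<Rightarrow> ((nat \<Rightarrow> real) \<Rightarrow> real) \<Rightarrow> (nat \<Rightarrow> real) \<Rightarrow> real" where
  "dir_deriv v f x = deriv (\<lambda>t. f (\<lambda>i. x i + t * v i)) 0"

definition dir_deriv_pow :: "(nat \<Rightarrow> real) \<Rightarrow> nat \<Rightarrow> ((nat \<Rightarrow> real) \<Rightarrow> real) \<Rightarrow> (nat \<Rightarrow> real) \<Rightarrow> real" where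
  "dir_deriv_pow v k f = (dir_deriv v ^^ k) f"

end

theory Submission
  imports Defs
begin


definition S :: "nat \<Rightarrow> real \<Rightarrow> real" where
  "S j x = integral {0..1} (\<lambda>t. t^j * cos (t*x + real j*pi/2))"

lemma S_deriv: "(S j has_real_derivative S (Suc j) x) (at x)"
proof -
  have d: "((\<lambda>x. integral (cbox 0 1) (\<lambda>t::real. t^j * cos (t*x + real j*pi/2))) has_field_derivative
        integral (cbox 0 1) (\<lambda>t. t^j * (- sin (t*x + real j*pi/2) * t))) (at x within UNIV)"
  proof (rule leibniz_rule_field_derivative)
    have "continuous_on UNIV (\<lambda>p::real\<times>real. snd p^j * (- sin (snd p*fst p + real j*pi/2) * snd p))"
      by (intro continuous_intros)
    then show "continuous_on (UNIV \<times> cbox 0 1) (\<lambda>(x, t). t^j * (- sin (t*x + real j*pi/2) * t))"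
      unfolding split_beta by (rule continuous_on_subset) auto
  qed (auto intro!: derivative_eq_intros continuous_intros integrable_continuous_real
             simp: cbox_interval)
  have eq: "(\<lambda>t::real. t^j * (- sin (t*x + real j*pi/2) * t)) = (\<lambda>t. t^Suc j * cos (t*x + real (Suc j)*pi/2))"
  proof
    fix t :: real
    have "t*x + real (Suc j)*pi/2 = (t*x + real j*pi/2) + pi/2" by (simp add: algebra_simps add_divide_distrib)
    then have "cos (t*x + real (Suc j)*pi/2) = - sin (t*x + real j*pi/2)" by (simp only: cos_add) simp
    then show "t^j * (- sin (t*x + real j*pi/2) * t) = t^Suc j * cos (t*x + real (Suc j)*pi/2)" by simp
  qed
  show ?thesis using d unfolding eq S_def[abs_def] cbox_interval by simp
qed

lemma S_integral: "((\<lambda>t. t^j * cos (t*x + real j*pi/2)) has_integral S j x) {0..1}"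
  unfolding S_def by (intro integrable_integral integrable_continuous_real continuous_intros)

lemma S_bound1: "\<bar>S j x\<bar> \<le> 1"
proof -
  have "norm (S j x) \<le> 1 * Henstock_Kurzweil_Integration.content (cbox (0::real) 1)"
    by (rule has_integral_bound[OF _ S_integral[unfolded cbox_interval[symmetric]]])
       (auto simp: abs_mult power_le_one intro!: mult_le_one)
  then show ?thesis by simp
qed

lemma S_bound2: "\<bar>x * S j x\<bar> \<le> 3"
proof -
  define g where "g t = t^j * sin (t*x + real j*pi/2)" for t
  define a where "a t = real j * t^(j-1) * sin (t*x + real j*pi/2)" for t
  have d: "(g has_real_derivative (a t + x * (t^j * cos (t*x + real j*pi/2)))) (at t)" for t
    unfolding g_def a_def by (rule derivative_eq_intros refl | simp add: algebra_simps)+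
  have h1: "((\<lambda>t. a t + x * (t^j * cos (t*x + real j*pi/2))) has_integral (g 1 - g 0)) {0..1}"
    by (rule fundamental_theorem_of_calculus)
       (auto intro!: has_field_derivative_at_within d simp: has_real_derivative_iff_has_vector_derivative[symmetric])
  have ai: "(a has_integral integral {0..1} a) {0..1}"
    unfolding a_def by (intro integrable_integral integrable_continuous_real continuous_intros)
  have "((\<lambda>t. x * (t^j * cos (t*x + real j*pi/2))) has_integral (g 1 - g 0 - integral {0..1} a)) {0..1}"
    using has_integral_diff[OF h1 ai] by simp
  moreover have "((\<lambda>t. x * (t^j * cos (t*x + real j*pi/2))) has_integral x * S j x) {0..1}"
    using has_integral_mult_right[OF S_integral] by simp
  ultimately have eq: "x * S j x = g 1 - g 0 - integral {0..1} a"
    using has_integral_unique by blast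
  have g1: "\<bar>g 1\<bar> \<le> 1" "\<bar>g 0\<bar> \<le> 1" unfolding g_def by (simp, cases j, simp_all)
  have d2: "((\<lambda>t. t^j) has_real_derivative real j * t^(j-1)) (at t)" for t :: real
    by (rule derivative_eq_intros refl | simp)+
  have pi: "((\<lambda>t. real j * t^(j-1)) has_integral (1^j - 0^j)) {0..1}"
    by (rule fundamental_theorem_of_calculus)
       (auto intro!: has_field_derivative_at_within d2 simp: has_real_derivative_iff_has_vector_derivative[symmetric])
  have "norm (integral {0..1} a) \<le> integral {0..1} (\<lambda>t. real j * t^(j-1))"
  proof (rule integral_norm_bound_integral)
    show "a integrable_on {0..1}" using ai by blast
    show "(\<lambda>t. real j * t^(j-1)) integrable_on {0..1}" using pi by blast
    fix t :: real assume "t \<in> {0..1}"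
    then have "real j * t^(j-1) * \<bar>sin (t*x + real j*pi/2)\<bar> \<le> real j * t^(j-1)"
      by (intro mult_left_le) auto
    then show "norm (a t) \<le> real j * t^(j-1)" using \<open>t \<in> {0..1}\<close> by (simp add: a_def abs_mult)
  qed
  also have "\<dots> = 1^j - 0^j" using pi by (rule integral_unique)
  also have "\<dots> \<le> 1" by simp
  finally have "\<bar>integral {0..1} a\<bar> \<le> 1" by simp
  then show ?thesis unfolding eq using g1 by linarith
qed

lemma S_bound: "\<bar>S j x\<bar> \<le> sqrt (10 / (1 + x\<^sup>2))"
proof -
  have "\<bar>S j x\<bar>\<^sup>2 \<le> 1\<^sup>2" by (rule power_mono[OF S_bound1]) simp
  then have "(S j x)\<^sup>2 \<le> 1" by simp
  moreover have "\<bar>x * S j x\<bar>\<^sup>2 \<le> 3\<^sup>2" by (rule power_mono[OF S_bound2]) simp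
  then have "(x * S j x)\<^sup>2 \<le> 3\<^sup>2" by simp
  then have "x\<^sup>2 * (S j x)\<^sup>2 \<le> 9" by (simp add: power_mult_distrib)
  ultimately have "(S j x)\<^sup>2 * (1 + x\<^sup>2) \<le> 10" by (simp add: algebra_simps)
  then have "(S j x)\<^sup>2 \<le> 10 / (1 + x\<^sup>2)" by (simp add: field_simps add_pos_nonneg)
  then have "sqrt ((S j x)\<^sup>2) \<le> sqrt (10 / (1 + x\<^sup>2))" by (rule real_sqrt_le_mono)
  then show ?thesis by simp
qed



definition lprod :: "(nat \<Rightarrow> real \<Rightarrow> real) \<Rightarrow> (nat \<Rightarrow> real \<Rightarrow> real) \<Rightarrow> nat \<Rightarrow> real \<Rightarrow> real" where
  "lprod F G j x = (\<Sum>i=0..j. real (j choose i) * F i x * G (j-i) x)"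

lemma lprod_0: "lprod F G 0 x = F 0 x * G 0 x"
  by (simp add: lprod_def)

lemma lprod_deriv:
  assumes F: "\<And>i x. (F i has_real_derivative F (Suc i) x) (at x)"
    and G: "\<And>i x. (G i has_real_derivative G (Suc i) x) (at x)"
  shows "(lprod F G n has_real_derivative lprod F G (Suc n) x) (at x)"
proof -
  define T where "T i = F i x * G (Suc n - i) x" for i
  define A where "A = (\<Sum>i=0..n. real (n choose i) * (F (Suc i) x * G (n-i) x))"
  define B where "B = (\<Sum>i=0..n. real (n choose i) * (G (Suc (n-i)) x * F i x))"
  have "B = (\<Sum>i=0..Suc n. real (n choose i) * T i)"
    unfolding B_def T_def by (simp add: sum.atLeast0_atMost_Suc Suc_diff_le mult_ac)
  also have "\<dots> = T 0 + (\<Sum>i=0..n. real (n choose Suc i) * T (Suc i))"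
    unfolding sum.atLeast0_atMost_Suc_shift by (simp add: o_def)
  finally have Beq: "B = T 0 + (\<Sum>i=0..n. real (n choose Suc i) * T (Suc i))" .
  have "lprod F G (Suc n) x = (\<Sum>i=0..Suc n. real (Suc n choose i) * T i)"
    unfolding lprod_def T_def by (simp add: mult_ac)
  also have "\<dots> = T 0 + (\<Sum>i=0..n. real (Suc n choose Suc i) * T (Suc i))"
    unfolding sum.atLeast0_atMost_Suc_shift by (simp add: o_def)
  also have "\<dots> = T 0 + (\<Sum>i=0..n. real (n choose i) * T (Suc i)) + (\<Sum>i=0..n. real (n choose Suc i) * T (Suc i))"
    by (simp add: distrib_right sum.distrib)
  also have "(\<Sum>i=0..n. real (n choose i) * T (Suc i)) = A"
    unfolding A_def T_def by simp
  finally have sumeq: "A + B = lprod F G (Suc n) x" using Beq by simp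
  have "(lprod F G n has_real_derivative (\<Sum>i = 0..n.
               real (n choose i) * (F (Suc i) x * G (n-i) x + G (Suc (n-i)) x * F i x))) (at x)"
    unfolding lprod_def[abs_def]
    by (rule derivative_eq_intros F G refl | simp add: algebra_simps)+
  moreover have "(\<Sum>i = 0..n.
               real (n choose i) * (F (Suc i) x * G (n-i) x + G (Suc (n-i)) x * F i x)) = lprod F G (Suc n) x"
    unfolding sumeq[symmetric] A_def B_def by (simp add: distrib_left sum.distrib)
  ultimately show ?thesis by simp
qed

lemma lprod_bound:
  assumes F: "\<And>i x. \<bar>F i x\<bar> \<le> c^i * u x" and G: "\<And>i x. \<bar>G i x\<bar> \<le> d^i * w x"
    and c: "c \<ge> 0" and d: "d \<ge> 0"
  shows "\<bar>lprod F G j x\<bar> \<le> (c+d)^j * (u x * w x)"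
proof -
  have "\<bar>lprod F G j x\<bar> \<le> (\<Sum>i=0..j. \<bar>real (j choose i) * F i x * G (j-i) x\<bar>)"
    unfolding lprod_def by (rule sum_abs)
  also have "\<dots> \<le> (\<Sum>i=0..j. real (j choose i) * ((c^i * u x) * (d^(j-i) * w x)))"
  proof (rule sum_mono)
    fix i assume "i \<in> {0..j}"
    have "\<bar>F i x\<bar> * \<bar>G (j-i) x\<bar> \<le> (c^i * u x) * (d^(j-i) * w x)"
      by (rule mult_mono[OF F G]) (use F[of i x] in auto)
    then show "\<bar>real (j choose i) * F i x * G (j-i) x\<bar> \<le> real (j choose i) * ((c^i * u x) * (d^(j-i) * w x))"
      by (simp add: abs_mult mult.assoc mult_left_mono)
  qed
  also have "\<dots> = (\<Sum>i=0..j. real (j choose i) * c^i * d^(j-i)) * (u x * w x)"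
    by (subst sum_distrib_right) (simp add: mult_ac)
  also have "\<dots> = (c+d)^j * (u x * w x)"
    by (simp add: binomial_ring atLeast0AtMost)
  finally show ?thesis .
qed



definition H :: "nat \<Rightarrow> real \<Rightarrow> real" where
  "H = lprod (lprod S S) (lprod S S)"

lemma S2_deriv: "(lprod S S j has_real_derivative lprod S S (Suc j) x) (at x)"
  by (rule lprod_deriv S_deriv)+

lemma H_deriv: "(H j has_real_derivative H (Suc j) x) (at x)"
  unfolding H_def by (rule lprod_deriv S2_deriv)+

lemma H_cont: "continuous_on UNIV (H j)"
  by (rule DERIV_continuous_on[OF H_deriv])

lemma H_meas[measurable]: "H j \<in> borel_measurable borel"
  by (rule borel_measurable_continuous_onI[OF H_cont])

lemma H_bound: "\<bar>H j x\<bar> \<le> 4^j * (100 / (1 + x\<^sup>2)\<^sup>2)"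
proof -
  define w where "w x = sqrt (10 / (1 + x\<^sup>2))" for x :: real
  have ww: "w x * w x = 10 / (1 + x\<^sup>2)" for x
    unfolding w_def by (simp add: add_pos_nonneg)
  have S1: "\<bar>S i x\<bar> \<le> 1^i * w x" for i x using S_bound[of i x] by (simp add: w_def)
  have S2: "\<bar>lprod S S i x\<bar> \<le> 2^i * (10 / (1 + x\<^sup>2))" for i x
    using lprod_bound[of S 1 w S 1 w i x, OF S1 S1] by (simp add: ww)
  have "\<bar>H j x\<bar> \<le> (2+2)^j * ((10 / (1 + x\<^sup>2)) * (10 / (1 + x\<^sup>2)))"
    unfolding H_def by (rule lprod_bound[OF S2 S2]) auto
  then show ?thesis by (simp add: power2_eq_square)
qed

lemma H0_eq: "H 0 x = (S 0 x)^4"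
  by (simp add: H_def lprod_0 eval_nat_numeral)

lemma H0_nonneg: "H 0 x \<ge> 0"
  by (simp add: H0_eq)

lemma S0_lip: "\<bar>S 0 x - S 0 y\<bar> \<le> \<bar>x - y\<bar>"
proof -
  have *: "\<bar>S 0 b - S 0 a\<bar> \<le> b - a" if ab: "a < b" for a b
  proof -
    obtain z where "S 0 b - S 0 a = (b - a) * S 1 z"
      using MVT2[OF ab, of "S 0" "S 1"] S_deriv[of 0] by auto
    then have "\<bar>S 0 b - S 0 a\<bar> = (b - a) * \<bar>S 1 z\<bar>" using ab by (simp add: abs_mult)
    also have "\<dots> \<le> (b - a) * 1" using S_bound1[of 1 z] ab by (intro mult_left_mono) auto
    finally show ?thesis by simp
  qed
  show ?thesis
    using *[of x y] *[of y x] by (cases "x < y"; cases "y < x") (auto simp: abs_minus_commute)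
qed

lemma S0_0: "S 0 0 = 1"
  by (simp add: S_def)

lemma S0_lower: "\<bar>x\<bar> \<le> 1/2 \<Longrightarrow> S 0 x \<ge> 1/2"
  using S0_lip[of x 0] by (simp add: S0_0)

lemma cauchy_int: "(\<integral>\<^sup>+x. ennreal (1 / (1 + x\<^sup>2)) \<partial>lborel) \<le> ennreal pi"
proof -
  define f where "f x = 1 / (1 + x\<^sup>2)" for x :: real
  have fm[measurable]: "f \<in> borel_measurable borel" unfolding f_def by measurable
  have half: "(\<integral>\<^sup>+x. ennreal (f x) * indicator {0..} x \<partial>lborel) = ennreal (pi/2)"
  proof -
    have "(\<integral>\<^sup>+x. ennreal (f x) * indicator {0..} x \<partial>lborel) = ennreal (pi/2 - arctan 0)"
    proof (rule nn_integral_FTC_atLeast)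
      show "((\<lambda>x. arctan x) \<longlongrightarrow> pi/2) at_top" by (rule tendsto_arctan_at_top)
    qed (auto simp: f_def intro!: derivative_eq_intros simp: field_simps power2_eq_square add_nonneg_eq_0_iff)
    then show ?thesis by simp
  qed
  have "(\<integral>\<^sup>+x. ennreal (f x) * indicator {..0} x \<partial>lborel) =
        (\<integral>\<^sup>+x. ennreal (f (0 + (-1) * x)) * indicator {..0} (0 + (-1) * x) \<partial>lborel)"
    using nn_integral_real_affine[of "\<lambda>x. ennreal (f x) * indicator {..0} x" "-1" 0] by simp
  also have "\<dots> = (\<integral>\<^sup>+x. ennreal (f x) * indicator {0..} x \<partial>lborel)"
    by (intro nn_integral_cong) (auto simp: f_def split: split_indicator)
  finally have half2: "(\<integral>\<^sup>+x. ennreal (f x) * indicator {..0} x \<partial>lborel) = ennreal (pi/2)"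
    using half by simp
  have "(\<integral>\<^sup>+x. ennreal (f x) \<partial>lborel) \<le>
        (\<integral>\<^sup>+x. ennreal (f x) * indicator {0..} x + ennreal (f x) * indicator {..0} x \<partial>lborel)"
    by (intro nn_integral_mono) (auto split: split_indicator)
  also have "\<dots> = ennreal (pi/2) + ennreal (pi/2)"
    by (subst nn_integral_add) (auto simp: half half2)
  also have "\<dots> = ennreal pi" by (simp flip: ennreal_plus)
  finally show ?thesis by (simp add: f_def)
qed



lemma H_int_bound: "(\<integral>\<^sup>+x. ennreal \<bar>H j x\<bar> \<partial>lborel) \<le> ennreal (4^j * (100 * pi))"
proof -
  have "(\<integral>\<^sup>+x. ennreal \<bar>H j x\<bar> \<partial>lborel) \<le> (\<integral>\<^sup>+x. ennreal (4^j * 100) * ennreal (1 / (1 + x\<^sup>2)) \<partial>lborel)"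
  proof (intro nn_integral_mono)
    fix x :: real
    have p: "1 \<le> 1 + x\<^sup>2" by simp
    have q: "0 < 1 + x\<^sup>2" by (simp add: add_pos_nonneg)
    have "1 + x\<^sup>2 \<le> (1 + x\<^sup>2)\<^sup>2" using p q by (simp add: power2_eq_square mult_le_cancel_left1)
    then have "100 / (1 + x\<^sup>2)\<^sup>2 \<le> 100 / (1 + x\<^sup>2)"
      using q by (intro divide_left_mono) auto
    then have "4^j * (100 / (1 + x\<^sup>2)\<^sup>2) \<le> 4^j * (100 / (1 + x\<^sup>2))"
      by (intro mult_left_mono) auto
    then have "\<bar>H j x\<bar> \<le> 4^j * 100 * (1 / (1 + x\<^sup>2))"
      using H_bound[of j x] by simp
    moreover have "ennreal (4^j * 100) * ennreal (1 / (1 + x\<^sup>2)) = ennreal (4^j * 100 * (1 / (1 + x\<^sup>2)))"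
      by (rule ennreal_mult[symmetric]) (auto simp: add_pos_nonneg)
    ultimately show "ennreal \<bar>H j x\<bar> \<le> ennreal (4^j * 100) * ennreal (1 / (1 + x\<^sup>2))"
      by (simp add: ennreal_leI)
  qed
  also have "\<dots> = ennreal (4^j * 100) * (\<integral>\<^sup>+x. ennreal (1 / (1 + x\<^sup>2)) \<partial>lborel)"
    by (rule nn_integral_cmult) measurable
  also have "\<dots> \<le> ennreal (4^j * 100) * ennreal pi"
    by (intro mult_left_mono cauchy_int) auto
  also have "\<dots> = ennreal (4^j * (100 * pi))" by (simp add: ennreal_mult[symmetric] mult_ac)
  finally show ?thesis .
qed

lemma H_mom_bound: "(\<integral>\<^sup>+x. ennreal (H 0 x * x\<^sup>2) \<partial>lborel) \<le> ennreal (100 * pi)"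
proof -
  have "(\<integral>\<^sup>+x. ennreal (H 0 x * x\<^sup>2) \<partial>lborel) \<le> (\<integral>\<^sup>+x. ennreal 100 * ennreal (1 / (1 + x\<^sup>2)) \<partial>lborel)"
  proof (intro nn_integral_mono)
    fix x :: real
    have "H 0 x * x\<^sup>2 \<le> (100 / (1 + x\<^sup>2)\<^sup>2) * x\<^sup>2"
      using H_bound[of 0 x] by (intro mult_right_mono) auto
    also have "\<dots> = 100 / (1 + x\<^sup>2) * (x\<^sup>2 / (1 + x\<^sup>2))" by (simp add: power2_eq_square)
    also have "\<dots> \<le> 100 / (1 + x\<^sup>2) * 1"
      by (intro mult_left_mono) (auto simp: add_pos_nonneg)
    finally have "H 0 x * x\<^sup>2 \<le> 100 * (1 / (1 + x\<^sup>2))" by simp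
    moreover have "ennreal 100 * ennreal (1 / (1 + x\<^sup>2)) = ennreal (100 * (1 / (1 + x\<^sup>2)))"
      by (rule ennreal_mult[symmetric]) (auto simp: add_pos_nonneg)
    ultimately show "ennreal (H 0 x * x\<^sup>2) \<le> ennreal 100 * ennreal (1 / (1 + x\<^sup>2))"
      by (simp only: ennreal_leI)
  qed
  also have "\<dots> = ennreal 100 * (\<integral>\<^sup>+x. ennreal (1 / (1 + x\<^sup>2)) \<partial>lborel)"
    by (rule nn_integral_cmult) measurable
  also have "\<dots> \<le> ennreal 100 * ennreal pi"
    by (intro mult_left_mono cauchy_int) auto
  also have "\<dots> = ennreal (100 * pi)" by (subst ennreal_mult) auto
  finally show ?thesis .
qed

lemma H_int_lower: "ennreal (1/16) \<le> (\<integral>\<^sup>+x. ennreal (H 0 x) \<partial>lborel)"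
proof -
  have "(\<integral>\<^sup>+x. ennreal (1/16) * indicator {-1/2..1/2::real} x \<partial>lborel) \<le> (\<integral>\<^sup>+x. ennreal (H 0 x) \<partial>lborel)"
  proof (intro nn_integral_mono)
    fix x :: real
    show "ennreal (1/16) * indicator {-1/2..1/2::real} x \<le> ennreal (H 0 x)"
    proof (cases "x \<in> {-1/2..1/2}")
      case True
      then have "S 0 x \<ge> 1/2" by (intro S0_lower) auto
      then have "(1/2)^4 \<le> (S 0 x)^4" by (intro power_mono) auto
      moreover have "(1/2::real)^4 = 1/16" by (simp add: eval_nat_numeral)
      ultimately have h: "1/16 \<le> H 0 x" unfolding H0_eq by linarith
      show ?thesis using h True by (simp add: ennreal_leI)
    qed simp
  qed
  moreover have "(\<integral>\<^sup>+x. ennreal (1/16) * indicator {-1/2..1/2::real} x \<partial>lborel) = ennreal (1/16) * emeasure lborel {-1/2..1/2::real}"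
    by (rule nn_integral_cmult_indicator) simp
  ultimately show ?thesis by simp
qed

definition z0 :: real where "z0 = enn2real (\<integral>\<^sup>+x. ennreal (H 0 x) \<partial>lborel)"

lemma z0: "(\<integral>\<^sup>+x. ennreal (H 0 x) \<partial>lborel) = ennreal z0" "z0 \<ge> 1/16"
proof -
  have "(\<integral>\<^sup>+x. ennreal (H 0 x) \<partial>lborel) \<le> ennreal (4^0 * (100 * pi))"
    using H_int_bound[of 0] H0_nonneg by simp
  then have "(\<integral>\<^sup>+x. ennreal (H 0 x) \<partial>lborel) < top" using ennreal_less_top order.strict_trans1 by blast
  then show "(\<integral>\<^sup>+x. ennreal (H 0 x) \<partial>lborel) = ennreal z0"
    unfolding z0_def by (simp add: less_top ennreal_enn2real)
  moreover have z0nn: "0 \<le> z0" unfolding z0_def by simp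
  ultimately show "z0 \<ge> 1/16" using H_int_lower ennreal_le_iff[OF z0nn] by simp
qed

definition Phi :: "nat \<Rightarrow> real \<Rightarrow> real" where "Phi j x = H j x / z0"

lemma Phi_deriv: "(Phi j has_real_derivative Phi (Suc j) x) (at x)"
  using DERIV_cdivide[OF H_deriv[of j x], of z0] by (simp add: Phi_def[abs_def])

lemma Phi_nonneg: "Phi 0 x \<ge> 0"
  using z0(2) H0_nonneg by (simp add: Phi_def)

lemma Phi_meas[measurable]: "Phi j \<in> borel_measurable borel"
  unfolding Phi_def[abs_def] by measurable

lemma Phi_int: "(\<integral>\<^sup>+x. ennreal (Phi 0 x) \<partial>lborel) = 1"
proof -
  have "(\<integral>\<^sup>+x. ennreal (Phi 0 x) \<partial>lborel) = (\<integral>\<^sup>+x. ennreal (1/z0) * ennreal (H 0 x) \<partial>lborel)"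
    using z0(2) H0_nonneg by (intro nn_integral_cong) (simp add: Phi_def ennreal_mult[symmetric])
  also have "\<dots> = ennreal (1/z0) * ennreal z0" by (simp add: nn_integral_cmult z0(1))
  also have "\<dots> = 1" using z0(2) by (simp add: ennreal_mult[symmetric])
  finally show ?thesis .
qed

definition M0 :: real where "M0 = 1600 * pi"

lemma M0_ge1: "M0 \<ge> 1"
  unfolding M0_def using pi_gt3 by simp

lemma Phi_int_bound: "(\<integral>\<^sup>+x. ennreal \<bar>Phi j x\<bar> \<partial>lborel) \<le> ennreal (M0 * 4^j)"
proof -
  have "(\<integral>\<^sup>+x. ennreal \<bar>Phi j x\<bar> \<partial>lborel) = (\<integral>\<^sup>+x. ennreal (1/z0) * ennreal \<bar>H j x\<bar> \<partial>lborel)"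
    using z0(2) by (intro nn_integral_cong) (simp add: Phi_def ennreal_mult[symmetric])
  also have "\<dots> = ennreal (1/z0) * (\<integral>\<^sup>+x. ennreal \<bar>H j x\<bar> \<partial>lborel)" by (simp add: nn_integral_cmult)
  also have "\<dots> \<le> ennreal (1/z0) * ennreal (4^j * (100 * pi))" by (intro mult_left_mono H_int_bound) auto
  also have "\<dots> = ennreal ((1/z0) * (4^j * (100 * pi)))" using z0(2) by (simp add: ennreal_mult[symmetric])
  also have "\<dots> \<le> ennreal (M0 * 4^j)"
  proof (intro ennreal_leI)
    have "(1/z0) \<le> 16" using z0(2) by (simp add: field_simps)
    then have "(1/z0) * (4^j * (100 * pi)) \<le> 16 * (4^j * (100 * pi))"
      by (intro mult_right_mono) auto
    then show "(1/z0) * (4^j * (100 * pi)) \<le> M0 * 4^j" by (simp add: M0_def mult_ac)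
  qed
  finally show ?thesis .
qed

lemma Phi_mom_bound: "(\<integral>\<^sup>+x. ennreal (Phi 0 x * x\<^sup>2) \<partial>lborel) \<le> ennreal M0"
proof -
  have "(\<integral>\<^sup>+x. ennreal (Phi 0 x * x\<^sup>2) \<partial>lborel) = (\<integral>\<^sup>+x. ennreal (1/z0) * ennreal (H 0 x * x\<^sup>2) \<partial>lborel)"
    using z0(2) H0_nonneg by (intro nn_integral_cong) (simp add: Phi_def ennreal_mult[symmetric])
  also have "\<dots> = ennreal (1/z0) * (\<integral>\<^sup>+x. ennreal (H 0 x * x\<^sup>2) \<partial>lborel)" by (simp add: nn_integral_cmult)
  also have "\<dots> \<le> ennreal (1/z0) * ennreal (100 * pi)" by (intro mult_left_mono H_mom_bound) auto
  also have "\<dots> = ennreal ((1/z0) * (100 * pi))" using z0(2) by (simp add: ennreal_mult[symmetric])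
  also have "\<dots> \<le> ennreal M0"
  proof (intro ennreal_leI)
    have "(1/z0) \<le> 16" using z0(2) by (simp add: field_simps)
    then have "(1/z0) * (100 * pi) \<le> 16 * (100 * pi)"
      by (intro mult_right_mono) auto
    then show "(1/z0) * (100 * pi) \<le> M0" by (simp add: M0_def)
  qed
  finally show ?thesis .
qed



definition Psi :: "real \<Rightarrow> nat \<Rightarrow> real \<Rightarrow> real" where
  "Psi c j t = c^Suc j * Phi j (c*t)"

lemma Psi_deriv: "(Psi c j has_real_derivative Psi c (Suc j) t) (at t)"
proof -
  have "((\<lambda>t. Phi j (c*t)) has_real_derivative Phi (Suc j) (c*t) * c) (at t)"
    by (rule DERIV_chain2[OF Phi_deriv]) (auto intro!: derivative_eq_intros)
  then have "((\<lambda>t. c^Suc j * Phi j (c*t)) has_real_derivative c^Suc j * (Phi (Suc j) (c*t) * c)) (at t)"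
    by (rule DERIV_cmult)
  then show ?thesis by (simp add: Psi_def[abs_def] mult_ac)
qed

lemma Psi_cont: "continuous_on UNIV (Psi c j)"
  by (rule DERIV_continuous_on[OF Psi_deriv])

lemma Psi_meas[measurable]: "Psi c j \<in> borel_measurable borel"
  by (rule borel_measurable_continuous_onI[OF Psi_cont])

lemma Psi_nonneg: "c > 0 \<Longrightarrow> Psi c 0 t \<ge> 0"
  by (simp add: Psi_def Phi_nonneg)

lemma scale_int:
  fixes g :: "real \<Rightarrow> real"
  assumes c: "c > 0" and g[measurable]: "g \<in> borel_measurable borel" and gn: "\<And>s. g s \<ge> 0"
  shows "(\<integral>\<^sup>+t. ennreal (c * g (c*t)) \<partial>lborel) = (\<integral>\<^sup>+s. ennreal (g s) \<partial>lborel)"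
proof -
  have "(\<integral>\<^sup>+s. ennreal (g s) \<partial>lborel) = ennreal \<bar>c\<bar> * (\<integral>\<^sup>+t. ennreal (g (0 + c*t)) \<partial>lborel)"
    using nn_integral_real_affine[of "\<lambda>s. ennreal (g s)" c 0] c by simp
  also have "\<dots> = (\<integral>\<^sup>+t. ennreal c * ennreal (g (c*t)) \<partial>lborel)"
    using c by (subst nn_integral_cmult) auto
  also have "\<dots> = (\<integral>\<^sup>+t. ennreal (c * g (c*t)) \<partial>lborel)"
    using c gn by (intro nn_integral_cong) (simp add: ennreal_mult)
  finally show ?thesis by simp
qed

lemma Psi_int: "c > 0 \<Longrightarrow> (\<integral>\<^sup>+t. ennreal (Psi c 0 t) \<partial>lborel) = 1"
  using scale_int[of c "Phi 0"] Phi_nonneg Phi_int by (simp add: Psi_def)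

definition K0 :: real where "K0 = 4 * M0"

lemma K0_pos: "K0 > 0" using M0_ge1 by (simp add: K0_def)

lemma Psi_int_bound:
  assumes c: "c > 0"
  shows "(\<integral>\<^sup>+t. ennreal \<bar>Psi c j t\<bar> \<partial>lborel) \<le> ennreal ((c * K0)^j)"
proof (cases j)
  case 0
  then show ?thesis using Psi_int[OF c] Psi_nonneg[OF c] by simp
next
  case (Suc m)
  have "(\<integral>\<^sup>+t. ennreal \<bar>Psi c j t\<bar> \<partial>lborel) = (\<integral>\<^sup>+t. ennreal (c^j) * ennreal (c * \<bar>Phi j (c*t)\<bar>) \<partial>lborel)"
    using c by (intro nn_integral_cong) (simp add: Psi_def abs_mult ennreal_mult[symmetric] mult_ac)
  also have "\<dots> = ennreal (c^j) * (\<integral>\<^sup>+t. ennreal (c * \<bar>Phi j (c*t)\<bar>) \<partial>lborel)"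
    by (subst nn_integral_cmult) auto
  also have "(\<integral>\<^sup>+t. ennreal (c * \<bar>Phi j (c*t)\<bar>) \<partial>lborel) = (\<integral>\<^sup>+s. ennreal \<bar>Phi j s\<bar> \<partial>lborel)"
    using scale_int[of c "\<lambda>s. \<bar>Phi j s\<bar>"] c by simp
  also have "ennreal (c^j) * \<dots> \<le> ennreal (c^j) * ennreal (M0 * 4^j)"
    by (intro mult_left_mono Phi_int_bound) auto
  also have "\<dots> = ennreal (c^j * (M0 * 4^j))" using c M0_ge1 by (simp add: ennreal_mult)
  also have "\<dots> \<le> ennreal ((c * K0)^j)"
  proof (intro ennreal_leI)
    have "M0 \<le> M0^j" using M0_ge1 Suc by (simp add: power_increasing[of 1 j M0, simplified])
    then have "c^j * (M0 * 4^j) \<le> c^j * (M0^j * 4^j)"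
      using c by (intro mult_left_mono mult_right_mono) auto
    then show "c^j * (M0 * 4^j) \<le> (c * K0)^j" by (simp add: K0_def power_mult_distrib mult_ac)
  qed
  finally show ?thesis .
qed

lemma Psi_mom:
  assumes c: "c > 0"
  shows "(\<integral>\<^sup>+t. ennreal (Psi c 0 t * t\<^sup>2) \<partial>lborel) \<le> ennreal (M0 / c\<^sup>2)"
proof -
  have "(\<integral>\<^sup>+t. ennreal (Psi c 0 t * t\<^sup>2) \<partial>lborel) = (\<integral>\<^sup>+t. ennreal (1/c\<^sup>2) * ennreal (c * (Phi 0 (c*t) * (c*t)\<^sup>2)) \<partial>lborel)"
  proof (intro nn_integral_cong)
    fix t :: real
    have "Psi c 0 t * t\<^sup>2 = (1/c\<^sup>2) * (c * (Phi 0 (c*t) * (c*t)\<^sup>2))"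
      using c by (simp add: Psi_def field_simps power2_eq_square)
    moreover have "0 \<le> c * (Phi 0 (c*t) * (c*t)\<^sup>2)" using c Phi_nonneg by simp
    ultimately show "ennreal (Psi c 0 t * t\<^sup>2) = ennreal (1/c\<^sup>2) * ennreal (c * (Phi 0 (c*t) * (c*t)\<^sup>2))"
      by (simp only: ennreal_mult[symmetric] zero_le_divide_iff zero_le_power2 zero_le_one simp_thms)
  qed
  also have "\<dots> = ennreal (1/c\<^sup>2) * (\<integral>\<^sup>+t. ennreal (c * (Phi 0 (c*t) * (c*t)\<^sup>2)) \<partial>lborel)"
    by (subst nn_integral_cmult) auto
  also have "(\<integral>\<^sup>+t. ennreal (c * (Phi 0 (c*t) * (c*t)\<^sup>2)) \<partial>lborel) = (\<integral>\<^sup>+s. ennreal (Phi 0 s * s\<^sup>2) \<partial>lborel)"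
    using scale_int[of c "\<lambda>s. Phi 0 s * s\<^sup>2"] c Phi_nonneg by simp
  also have "ennreal (1/c\<^sup>2) * \<dots> \<le> ennreal (1/c\<^sup>2) * ennreal M0"
    by (intro mult_left_mono Phi_mom_bound) auto
  also have "\<dots> = ennreal (M0 / c\<^sup>2)" using c M0_ge1 by (simp add: ennreal_mult[symmetric])
  finally show ?thesis .
qed



definition P :: "real \<Rightarrow> nat \<Rightarrow> (nat \<Rightarrow> nat) \<Rightarrow> (nat \<Rightarrow> real) \<Rightarrow> real" where
  "P c n \<alpha> x = (\<Prod>j<n. Psi c (\<alpha> j) (x j))"

lemma P_upd_deriv:
  assumes i: "i < n"
  shows "((\<lambda>t. P c n \<alpha> (x(i:=t))) has_real_derivative P c n (\<alpha>(i := Suc (\<alpha> i))) (x(i:=t0))) (at t0)"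
proof -
  define R where "R = (\<Prod>j\<in>{..<n}-{i}. Psi c (\<alpha> j) (x j))"
  have eq1: "P c n \<alpha> (x(i:=t)) = Psi c (\<alpha> i) t * R" for t
    unfolding P_def R_def using i
    by (subst prod.remove[of _ i]) (auto intro!: prod.cong)
  have eq2: "P c n (\<alpha>(i := Suc (\<alpha> i))) (x(i:=t0)) = Psi c (Suc (\<alpha> i)) t0 * R"
    unfolding P_def R_def using i
    by (subst prod.remove[of _ i]) (auto intro!: prod.cong)
  show ?thesis unfolding eq1 eq2 by (intro DERIV_cmult_right Psi_deriv)
qed

lemma count_list_Cons_fun: "count_list (i#is) = (count_list is)(i := Suc (count_list is i))"
  by (rule ext) auto

lemma pd_P: "set is \<subseteq> {..<n} \<Longrightarrow> pd is (P c n (\<lambda>_. 0)) = P c n (count_list is)"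
proof (induction "is")
  case Nil
  have "(\<lambda>_. 0::nat) = count_list []" by (rule ext) simp
  then show ?case by simp
next
  case (Cons i "is")
  then have i: "i < n" and IH: "pd is (P c n (\<lambda>_. 0)) = P c n (count_list is)" by auto
  show ?case
  proof (rule ext)
    fix x
    have "pd (i#is) (P c n (\<lambda>_. 0)) x = deriv (\<lambda>t. P c n (count_list is) (x(i:=t))) (x i)"
      by (simp add: IH)
    also have "\<dots> = P c n (count_list (i#is)) (x(i := x i))"
      unfolding count_list_Cons_fun by (rule DERIV_imp_deriv[OF P_upd_deriv[OF i]])
    finally show "pd (i#is) (P c n (\<lambda>_. 0)) x = P c n (count_list (i#is)) x" by simp
  qed
qed

lemma P_cont: "continuous_on UNIV (P c n \<alpha>)"
proof -
  have "continuous_on UNIV (\<lambda>x. Psi c (\<alpha> j) (x j))" for j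
    by (rule continuous_on_compose2[OF Psi_cont continuous_on_product_coordinates]) auto
  then show ?thesis unfolding P_def[abs_def] by (intro continuous_intros)
qed

lemma smooth_P: "smooth_n n (P c n (\<lambda>_. 0))"
  unfolding smooth_n_def
proof (intro allI impI conjI ballI)
  fix "is" assume "set is \<subseteq> {..<n}"
  then show "continuous_on (Rn n) (pd is (P c n (\<lambda>_. 0)))"
    by (simp add: pd_P continuous_on_subset[OF P_cont])
  fix i x assume i: "i < n" and "x \<in> Rn n"
  have "set (i#is) \<subseteq> {..<n}" using i \<open>set is \<subseteq> {..<n}\<close> by auto
  then show "((\<lambda>t. pd is (P c n (\<lambda>_. 0)) (x(i := t))) has_real_derivative pd (i # is) (P c n (\<lambda>_. 0)) x) (at (x i))"
    using P_upd_deriv[OF i, of c "count_list is" x "x i"] \<open>set is \<subseteq> {..<n}\<close>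
    by (simp only: pd_P count_list_Cons_fun fun_upd_triv)
qed

lemma P_line_deriv:
  "((\<lambda>t. P c n \<alpha> (\<lambda>i. x i + t * v i)) has_real_derivative
     (\<Sum>i<n. v i * P c n (\<alpha>(i := Suc (\<alpha> i))) (\<lambda>i. x i + t * v i))) (at t)"
proof -
  have d: "((\<lambda>t. Psi c (\<alpha> j) (x j + t * v j)) has_real_derivative Psi c (Suc (\<alpha> j)) (x j + t * v j) * v j) (at t)" for j
    by (rule DERIV_chain2[OF Psi_deriv]) (auto intro!: derivative_eq_intros)
  have "((\<lambda>t. \<Prod>j<n. Psi c (\<alpha> j) (x j + t * v j)) has_real_derivative
      (\<Sum>j<n. Psi c (Suc (\<alpha> j)) (x j + t * v j) * v j * (\<Prod>y\<in>{..<n}-{j}. Psi c (\<alpha> y) (x y + t * v y)))) (at t)"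
    by (rule has_field_derivative_prod[OF d])
  moreover have "(\<Sum>j<n. Psi c (Suc (\<alpha> j)) (x j + t * v j) * v j * (\<Prod>y\<in>{..<n}-{j}. Psi c (\<alpha> y) (x y + t * v y)))
      = (\<Sum>i<n. v i * P c n (\<alpha>(i := Suc (\<alpha> i))) (\<lambda>i. x i + t * v i))"
  proof (rule sum.cong[OF refl])
    fix j assume j: "j \<in> {..<n}"
    have "P c n (\<alpha>(j := Suc (\<alpha> j))) (\<lambda>i. x i + t * v i) =
          Psi c (Suc (\<alpha> j)) (x j + t * v j) * (\<Prod>y\<in>{..<n}-{j}. Psi c (\<alpha> y) (x y + t * v y))"
      unfolding P_def using j by (subst prod.remove[of _ j]) (auto intro!: prod.cong)
    then show "Psi c (Suc (\<alpha> j)) (x j + t * v j) * v j * (\<Prod>y\<in>{..<n}-{j}. Psi c (\<alpha> y) (x y + t * v y))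
      = v j * P c n (\<alpha>(j := Suc (\<alpha> j))) (\<lambda>i. x i + t * v i)" by simp
  qed
  ultimately show ?thesis by (simp add: P_def)
qed

definition W :: "nat \<Rightarrow> nat \<Rightarrow> nat list set" where
  "W n k = {xs. set xs \<subseteq> {..<n} \<and> length xs = k}"

lemma W_finite: "finite (W n k)"
  unfolding W_def by (rule finite_lists_length_eq) simp

lemma W_Suc: "W n (Suc k) = (\<lambda>(xs, i). i # xs) ` (W n k \<times> {..<n})"
  unfolding W_def by (rule lists_length_Suc_eq)

lemma W_sum_Suc: "(\<Sum>ys\<in>W n (Suc k). g ys) = (\<Sum>xs\<in>W n k. \<Sum>i<n. g (i # xs))"
proof -
  have inj: "inj_on (\<lambda>(xs, i). i # xs) (W n k \<times> {..<n})"
    by (auto simp: inj_on_def)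
  have "(\<Sum>ys\<in>W n (Suc k). g ys) = (\<Sum>p\<in>W n k \<times> {..<n}. g ((\<lambda>(xs, i). i # xs) p))"
    unfolding W_Suc by (rule sum.reindex[OF inj, unfolded comp_def])
  also have "\<dots> = (\<Sum>xs\<in>W n k. \<Sum>i<n. g (i # xs))"
    by (subst sum.cartesian_product) (simp add: split_beta)
  finally show ?thesis .
qed

lemma W_0: "W n 0 = {[]}" unfolding W_def by auto

definition cv :: "(nat \<Rightarrow> real) \<Rightarrow> nat list \<Rightarrow> real" where
  "cv v xs = prod_list (map v xs)"

definition Q :: "real \<Rightarrow> nat \<Rightarrow> (nat \<Rightarrow> real) \<Rightarrow> nat \<Rightarrow> (nat \<Rightarrow> real) \<Rightarrow> real" where
  "Q c n v k x = (\<Sum>xs\<in>W n k. cv v xs * P c n (count_list xs) x)"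

lemma dir_deriv_Q: "dir_deriv v (Q c n v k) x = Q c n v (Suc k) x"
proof -
  have "((\<lambda>t. Q c n v k (\<lambda>i. x i + t * v i)) has_real_derivative
     (\<Sum>xs\<in>W n k. cv v xs * (\<Sum>i<n. v i * P c n ((count_list xs)(i := Suc (count_list xs i))) (\<lambda>i. x i + 0 * v i)))) (at 0)"
    unfolding Q_def by (intro DERIV_sum DERIV_cmult P_line_deriv)
  then have "dir_deriv v (Q c n v k) x =
     (\<Sum>xs\<in>W n k. cv v xs * (\<Sum>i<n. v i * P c n ((count_list xs)(i := Suc (count_list xs i))) (\<lambda>i. x i + 0 * v i)))"
    unfolding dir_deriv_def by (rule DERIV_imp_deriv)
  also have "\<dots> = (\<Sum>xs\<in>W n k. \<Sum>i<n. cv v (i # xs) * P c n (count_list (i # xs)) x)"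
    by (simp add: count_list_Cons_fun sum_distrib_left cv_def mult_ac)
  also have "\<dots> = Q c n v (Suc k) x"
    unfolding Q_def by (rule W_sum_Suc[symmetric])
  finally show ?thesis .
qed

lemma dir_deriv_pow_P: "dir_deriv_pow v k (P c n (\<lambda>_. 0)) = Q c n v k"
proof (induction k)
  case 0
  have e: "count_list [] = (\<lambda>_. 0::nat)" by (rule ext) simp
  show ?case by (auto simp: dir_deriv_pow_def Q_def W_0 cv_def e)
next
  case (Suc k)
  then show ?case
    by (auto simp: dir_deriv_pow_def dir_deriv_Q)
qed



interpretation pl: product_sigma_finite "\<lambda>_::nat. lborel :: real measure"
  by standard

lemma prod_int:
  fixes g :: "nat \<Rightarrow> real \<Rightarrow> real"
  assumes gm: "\<And>j. g j \<in> borel_measurable borel" and gn: "\<And>j t. g j t \<ge> 0"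
  shows "(\<integral>\<^sup>+x. ennreal (\<Prod>j<n. g j (x j)) \<partial>lebesgue_n n) = (\<Prod>j<n. \<integral>\<^sup>+t. ennreal (g j t) \<partial>lborel)"
proof -
  have "(\<integral>\<^sup>+x. ennreal (\<Prod>j<n. g j (x j)) \<partial>lebesgue_n n) = (\<integral>\<^sup>+x. (\<Prod>j<n. ennreal (g j (x j))) \<partial>lebesgue_n n)"
    using gn by (intro nn_integral_cong) (simp add: prod_ennreal)
  also have "\<dots> = (\<Prod>j<n. \<integral>\<^sup>+t. ennreal (g j t) \<partial>lborel)"
    unfolding lebesgue_n_def
    by (rule pl.product_nn_integral_prod[of "{..<n}" "\<lambda>j t. ennreal (g j t)", simplified]) (use gm in measurable)
  finally show ?thesis .
qed

lemma P_meas[measurable]: "P c n \<alpha> \<in> borel_measurable (lebesgue_n n)"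
  unfolding P_def[abs_def] lebesgue_n_def by measurable

lemma P_int:
  assumes c: "c > 0"
  shows "(\<integral>\<^sup>+x. ennreal \<bar>P c n \<alpha> x\<bar> \<partial>lebesgue_n n) \<le> ennreal ((c * K0)^(\<Sum>j<n. \<alpha> j))"
proof -
  have "(\<integral>\<^sup>+x. ennreal \<bar>P c n \<alpha> x\<bar> \<partial>lebesgue_n n) = (\<integral>\<^sup>+x. ennreal (\<Prod>j<n. \<bar>Psi c (\<alpha> j) (x j)\<bar>) \<partial>lebesgue_n n)"
    by (simp add: P_def abs_prod)
  also have "\<dots> = (\<Prod>j<n. \<integral>\<^sup>+t. ennreal \<bar>Psi c (\<alpha> j) t\<bar> \<partial>lborel)"
    by (rule prod_int) auto
  also have "\<dots> \<le> (\<Prod>j<n. ennreal ((c * K0)^(\<alpha> j)))"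
    by (intro prod_mono_ennreal Psi_int_bound[OF c])
  also have "\<dots> = ennreal ((c * K0)^(\<Sum>j<n. \<alpha> j))"
    using c K0_pos by (simp add: prod_ennreal power_sum)
  finally show ?thesis .
qed

lemma sum_W_prod_list: "(\<Sum>xs\<in>W n k. prod_list (map f xs)) = (\<Sum>i<n. f i)^k" for f :: "nat \<Rightarrow> real"
proof (induction k)
  case 0
  then show ?case by (simp add: W_0)
next
  case (Suc k)
  have "(\<Sum>xs\<in>W n (Suc k). prod_list (map f xs)) = (\<Sum>xs\<in>W n k. \<Sum>i<n. f i * prod_list (map f xs))"
    by (simp add: W_sum_Suc)
  also have "\<dots> = (\<Sum>i<n. f i) * (\<Sum>xs\<in>W n k. prod_list (map f xs))"
    by (subst sum_distrib_left) (simp add: sum_distrib_right)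
  finally show ?case using Suc by simp
qed

lemma abs_cv: "\<bar>prod_list (map v xs)\<bar> = prod_list (map (\<lambda>i. \<bar>v i\<bar>) xs)" for v :: "nat \<Rightarrow> real"
  by (induction xs) (auto simp: abs_mult)

lemma Q_int:
  assumes c: "c > 0"
  shows "(\<integral>\<^sup>+x. ennreal \<bar>Q c n v k x\<bar> \<partial>lebesgue_n n) \<le> ennreal ((c * K0)^k * (\<Sum>i<n. \<bar>v i\<bar>)^k)"
proof -
  have "(\<integral>\<^sup>+x. ennreal \<bar>Q c n v k x\<bar> \<partial>lebesgue_n n) \<le>
        (\<integral>\<^sup>+x. (\<Sum>xs\<in>W n k. ennreal \<bar>cv v xs\<bar> * ennreal \<bar>P c n (count_list xs) x\<bar>) \<partial>lebesgue_n n)"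
  proof (intro nn_integral_mono)
    fix x
    have "\<bar>Q c n v k x\<bar> \<le> (\<Sum>xs\<in>W n k. \<bar>cv v xs\<bar> * \<bar>P c n (count_list xs) x\<bar>)"
      unfolding Q_def by (rule order_trans[OF sum_abs]) (simp add: abs_mult)
    then show "ennreal \<bar>Q c n v k x\<bar> \<le> (\<Sum>xs\<in>W n k. ennreal \<bar>cv v xs\<bar> * ennreal \<bar>P c n (count_list xs) x\<bar>)"
      by (simp add: ennreal_mult[symmetric] ennreal_leI)
  qed
  also have "\<dots> = (\<Sum>xs\<in>W n k. ennreal \<bar>cv v xs\<bar> * (\<integral>\<^sup>+x. ennreal \<bar>P c n (count_list xs) x\<bar> \<partial>lebesgue_n n))"
    by (subst nn_integral_sum) (auto simp: nn_integral_cmult)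
  also have "\<dots> \<le> (\<Sum>xs\<in>W n k. ennreal \<bar>cv v xs\<bar> * ennreal ((c * K0)^k))"
  proof (intro sum_mono mult_left_mono)
    fix xs assume "xs \<in> W n k"
    then have "(\<Sum>j<n. count_list xs j) = k" unfolding W_def by (auto intro: sum_count_set)
    then show "(\<integral>\<^sup>+x. ennreal \<bar>P c n (count_list xs) x\<bar> \<partial>lebesgue_n n) \<le> ennreal ((c * K0)^k)"
      using P_int[OF c, of n "count_list xs"] by simp
  qed simp
  also have "\<dots> = ennreal ((\<Sum>xs\<in>W n k. \<bar>cv v xs\<bar>) * (c * K0)^k)"
    using c K0_pos by (simp add: ennreal_mult[symmetric] sum_distrib_right)
  also have "(\<Sum>xs\<in>W n k. \<bar>cv v xs\<bar>) = (\<Sum>i<n. \<bar>v i\<bar>)^k"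
    unfolding cv_def abs_cv by (rule sum_W_prod_list)
  finally show ?thesis by (simp add: mult_ac)
qed

lemma sum_abs_le_sqrt:
  assumes "(\<Sum>i<n. (v i)\<^sup>2) = (1::real)"
  shows "(\<Sum>i<n. \<bar>v i\<bar>) \<le> sqrt (real n)"
proof -
  have "(\<Sum>i<n. \<bar>v i\<bar> * 1)\<^sup>2 \<le> (\<Sum>i<n. \<bar>v i\<bar>\<^sup>2) * (\<Sum>i<n. 1\<^sup>2)"
    by (rule Cauchy_Schwarz_ineq_sum)
  then have "(\<Sum>i<n. \<bar>v i\<bar>)\<^sup>2 \<le> real n" using assms by simp
  then show ?thesis by (rule real_le_rsqrt)
qed



lemma rho_moment:
  assumes c: "c > 0" and i: "i < n"
  shows "(\<integral>\<^sup>+x. ennreal (P c n (\<lambda>_. 0) x * (x i)\<^sup>2) \<partial>lebesgue_n n) \<le> ennreal (M0 / c\<^sup>2)"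
proof -
  define g where "g j t = (if j = i then Psi c 0 t * t\<^sup>2 else Psi c 0 t)" for j t
  have gm: "g j \<in> borel_measurable borel" for j unfolding g_def by (cases "j = i") auto
  have gn: "g j t \<ge> 0" for j t unfolding g_def using Psi_nonneg[OF c] by auto
  have "P c n (\<lambda>_. 0) x * (x i)\<^sup>2 = (\<Prod>j<n. g j (x j))" for x
  proof -
    have "(\<Prod>j<n. g j (x j)) = g i (x i) * (\<Prod>j\<in>{..<n}-{i}. g j (x j))"
      using i by (subst prod.remove[of _ i]) auto
    also have "(\<Prod>j\<in>{..<n}-{i}. g j (x j)) = (\<Prod>j\<in>{..<n}-{i}. Psi c 0 (x j))"
      by (intro prod.cong) (auto simp: g_def)
    also have "P c n (\<lambda>_. 0) x = Psi c 0 (x i) * (\<Prod>j\<in>{..<n}-{i}. Psi c 0 (x j))"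
      unfolding P_def using i by (subst prod.remove[of _ i]) auto
    ultimately show ?thesis by (simp add: g_def mult_ac)
  qed
  then have "(\<integral>\<^sup>+x. ennreal (P c n (\<lambda>_. 0) x * (x i)\<^sup>2) \<partial>lebesgue_n n) = (\<Prod>j<n. \<integral>\<^sup>+t. ennreal (g j t) \<partial>lborel)"
    using prod_int[of g n, OF gm gn] by simp
  also have "\<dots> = (\<integral>\<^sup>+t. ennreal (g i t) \<partial>lborel) * (\<Prod>j\<in>{..<n}-{i}. \<integral>\<^sup>+t. ennreal (g j t) \<partial>lborel)"
    using i by (subst prod.remove[of _ i]) auto
  also have "(\<Prod>j\<in>{..<n}-{i}. \<integral>\<^sup>+t. ennreal (g j t) \<partial>lborel) = 1"
    using Psi_int[OF c] by (intro prod.neutral) (auto simp: g_def)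
  also have "(\<integral>\<^sup>+t. ennreal (g i t) \<partial>lborel) \<le> ennreal (M0 / c\<^sup>2)"
    using Psi_mom[OF c] by (simp add: g_def)
  finally show ?thesis by simp
qed

theorem lemma5:
  shows "\<exists>A::real. A > 0 \<and>
    (\<forall>(n::nat) (C::real). n \<ge> 1 \<longrightarrow> C > 0 \<longrightarrow>
      (\<exists>\<rho> :: (nat \<Rightarrow> real) \<Rightarrow> real.
         smooth_n n \<rho> \<and>
         (\<forall>x\<in>Rn n. \<rho> x \<ge> 0) \<and>
         (\<integral>\<^sup>+ x. ennreal (\<rho> x) \<partial>lebesgue_n n) = 1 \<and>
         (\<forall>v\<in>Rn n. euclid_norm n v = 1 \<longrightarrow> (\<forall>k::nat.
            (\<integral>\<^sup>+ x. ennreal \<bar>dir_deriv_pow v k \<rho> x\<bar> \<partial>lebesgue_n n) \<le> ennreal (C ^ k))) \<and>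
         (\<forall>D::real. D > 0 \<longrightarrow>
            (\<integral>\<^sup>+ x. ennreal (\<rho> x) * indicator {y. euclid_norm n y > D} x \<partial>lebesgue_n n)
              \<le> ennreal (A * (real n / (C * D))\<^sup>2))))"
proof (rule exI[of _ "K0\<^sup>2 * M0"], intro conjI allI impI)
  show "K0\<^sup>2 * M0 > 0" using K0_pos M0_ge1 by simp
  fix n :: nat and C :: real
  assume n: "n \<ge> 1" and C: "C > 0"
  define c where "c = C / (K0 * sqrt (real n))"
  have sn: "sqrt (real n) > 0" using n by simp
  have c: "c > 0" unfolding c_def using C K0_pos sn by simp
  have cK: "c * K0 * sqrt (real n) = C" unfolding c_def using K0_pos sn by simp
  define \<rho> where "\<rho> = P c n (\<lambda>_. 0)"
  show "\<exists>\<rho>. smooth_n n \<rho> \<and> (\<forall>x\<in>Rn n. \<rho> x \<ge> 0) \<and>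
         (\<integral>\<^sup>+ x. ennreal (\<rho> x) \<partial>lebesgue_n n) = 1 \<and>
         (\<forall>v\<in>Rn n. euclid_norm n v = 1 \<longrightarrow> (\<forall>k::nat.
            (\<integral>\<^sup>+ x. ennreal \<bar>dir_deriv_pow v k \<rho> x\<bar> \<partial>lebesgue_n n) \<le> ennreal (C ^ k))) \<and>
         (\<forall>D::real. D > 0 \<longrightarrow>
            (\<integral>\<^sup>+ x. ennreal (\<rho> x) * indicator {y. euclid_norm n y > D} x \<partial>lebesgue_n n)
              \<le> ennreal (K0\<^sup>2 * M0 * (real n / (C * D))\<^sup>2))"
  proof (intro exI[of _ \<rho>] conjI ballI allI impI)
    show "smooth_n n \<rho>" unfolding \<rho>_def by (rule smooth_P)
    fix x show "\<rho> x \<ge> 0" unfolding \<rho>_def P_def using Psi_nonneg[OF c] by (intro prod_nonneg) auto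
  next
    show "(\<integral>\<^sup>+ x. ennreal (\<rho> x) \<partial>lebesgue_n n) = 1"
      unfolding \<rho>_def P_def using prod_int[of "\<lambda>_. Psi c 0" n] Psi_nonneg[OF c] Psi_int[OF c] by simp
  next
    fix v k assume v: "v \<in> Rn n" "euclid_norm n v = 1"
    then have "(\<Sum>i<n. (v i)\<^sup>2) = 1" unfolding euclid_norm_def by simp
    then have sv: "(\<Sum>i<n. \<bar>v i\<bar>) \<le> sqrt (real n)" by (rule sum_abs_le_sqrt)
    have "(\<integral>\<^sup>+ x. ennreal \<bar>dir_deriv_pow v k \<rho> x\<bar> \<partial>lebesgue_n n) \<le> ennreal ((c * K0)^k * (\<Sum>i<n. \<bar>v i\<bar>)^k)"
      unfolding \<rho>_def dir_deriv_pow_P by (rule Q_int[OF c])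
    also have "\<dots> \<le> ennreal (C^k)"
    proof (intro ennreal_leI)
      have "(c * K0)^k * (\<Sum>i<n. \<bar>v i\<bar>)^k = (c * K0 * (\<Sum>i<n. \<bar>v i\<bar>))^k" by (simp add: power_mult_distrib)
      also have "\<dots> \<le> (c * K0 * sqrt (real n))^k"
        using c K0_pos sv by (intro power_mono mult_left_mono) (auto intro: sum_nonneg)
      finally show "(c * K0)^k * (\<Sum>i<n. \<bar>v i\<bar>)^k \<le> C^k" using cK by simp
    qed
    finally show "(\<integral>\<^sup>+ x. ennreal \<bar>dir_deriv_pow v k \<rho> x\<bar> \<partial>lebesgue_n n) \<le> ennreal (C ^ k)" .
  next
    fix D :: real assume D: "D > 0"
    have rn: "\<rho> x \<ge> 0" for x unfolding \<rho>_def P_def using Psi_nonneg[OF c] by (intro prod_nonneg) auto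
    have m2: "(\<lambda>x. ennreal (\<rho> x * (x i)\<^sup>2)) \<in> borel_measurable (lebesgue_n n)" if "i < n" for i
    proof -
      have [measurable]: "(\<lambda>x. x i) \<in> borel_measurable (lebesgue_n n)"
        using measurable_component_singleton[of i "{..<n}" "\<lambda>_. lborel"] that
        unfolding lebesgue_n_def measurable_lborel1 by auto
      show ?thesis unfolding \<rho>_def by measurable
    qed
    have m: "(\<lambda>x. ennreal (1/D\<^sup>2) * ennreal (\<rho> x * (x i)\<^sup>2)) \<in> borel_measurable (lebesgue_n n)" if "i < n" for i
      using m2[OF that] by measurable
    have "(\<integral>\<^sup>+ x. (\<Sum>i<n. ennreal (1/D\<^sup>2) * ennreal (\<rho> x * (x i)\<^sup>2)) \<partial>lebesgue_n n) =
       (\<Sum>i<n. (\<integral>\<^sup>+ x. ennreal (1/D\<^sup>2) * ennreal (\<rho> x * (x i)\<^sup>2) \<partial>lebesgue_n n))"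
      by (rule nn_integral_sum) (auto intro: m)
    also have "\<dots> = (\<Sum>i<n. ennreal (1/D\<^sup>2) * (\<integral>\<^sup>+ x. ennreal (\<rho> x * (x i)\<^sup>2) \<partial>lebesgue_n n))"
      by (intro sum.cong refl nn_integral_cmult m2) auto
    finally have sumeq: "(\<integral>\<^sup>+ x. (\<Sum>i<n. ennreal (1/D\<^sup>2) * ennreal (\<rho> x * (x i)\<^sup>2)) \<partial>lebesgue_n n) =
       (\<Sum>i<n. ennreal (1/D\<^sup>2) * (\<integral>\<^sup>+ x. ennreal (\<rho> x * (x i)\<^sup>2) \<partial>lebesgue_n n))" .
    have "(\<integral>\<^sup>+ x. ennreal (\<rho> x) * indicator {y. euclid_norm n y > D} x \<partial>lebesgue_n n) \<le>
          (\<integral>\<^sup>+ x. (\<Sum>i<n. ennreal (1/D\<^sup>2) * ennreal (\<rho> x * (x i)\<^sup>2)) \<partial>lebesgue_n n)"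
    proof (intro nn_integral_mono)
      fix x
      show "ennreal (\<rho> x) * indicator {y. euclid_norm n y > D} x \<le> (\<Sum>i<n. ennreal (1/D\<^sup>2) * ennreal (\<rho> x * (x i)\<^sup>2))"
      proof (cases "euclid_norm n x > D")
        case True
        define s where "s = (\<Sum>i<n. (x i)\<^sup>2)"
        have s0: "s \<ge> 0" unfolding s_def by (intro sum_nonneg) auto
        have "D < sqrt s" using True unfolding euclid_norm_def s_def by simp
        then have "D\<^sup>2 < (sqrt s)\<^sup>2" using D by (intro power_strict_mono) auto
        then have "D\<^sup>2 < s" using s0 by simp
        then have "1 \<le> s / D\<^sup>2" using D by simp
        then have "\<rho> x * 1 \<le> \<rho> x * (s / D\<^sup>2)" using rn[of x] by (rule mult_left_mono)
        then have "\<rho> x \<le> \<rho> x * (s / D\<^sup>2)" by simp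
        also have "\<dots> = (\<Sum>i<n. (1/D\<^sup>2) * (\<rho> x * (x i)\<^sup>2))"
          unfolding s_def by (simp add: sum_distrib_left sum_divide_distrib mult_ac)
        finally have "ennreal (\<rho> x) \<le> ennreal (\<Sum>i<n. (1/D\<^sup>2) * (\<rho> x * (x i)\<^sup>2))" by (rule ennreal_leI)
        also have "\<dots> = (\<Sum>i<n. ennreal ((1/D\<^sup>2) * (\<rho> x * (x i)\<^sup>2)))"
          using rn[of x] by (subst sum_ennreal) auto
        also have "\<dots> = (\<Sum>i<n. ennreal (1/D\<^sup>2) * ennreal (\<rho> x * (x i)\<^sup>2))"
          using rn[of x] by (intro sum.cong refl ennreal_mult) auto
        finally show ?thesis using True by simp
      qed simp
    qed
    also have "\<dots> = (\<Sum>i<n. ennreal (1/D\<^sup>2) * (\<integral>\<^sup>+ x. ennreal (\<rho> x * (x i)\<^sup>2) \<partial>lebesgue_n n))"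
      by (rule sumeq)
    also have "\<dots> \<le> (\<Sum>i<n. ennreal (1/D\<^sup>2) * ennreal (M0 / c\<^sup>2))"
      unfolding \<rho>_def by (intro sum_mono mult_left_mono rho_moment[OF c]) auto
    also have "\<dots> = ennreal (real n * (1/D\<^sup>2 * (M0 / c\<^sup>2)))"
      using M0_ge1 c by (simp add: ennreal_mult[symmetric] ennreal_of_nat_eq_real_of_nat)
    also have "\<dots> = ennreal (K0\<^sup>2 * M0 * (real n / (C * D))\<^sup>2)"
    proof -
      have "real n * (1/D\<^sup>2 * (M0 / c\<^sup>2)) = K0\<^sup>2 * M0 * (real n / (C * D))\<^sup>2"
        unfolding c_def using sn D C K0_pos by (simp add: field_simps power2_eq_square)
      then show ?thesis by simp
    qed
    finally show "(\<integral>\<^sup>+ x. ennreal (\<rho> x) * indicator {y. euclid_norm n y > D} x \<partial>lebesgue_n n)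
              \<le> ennreal (K0\<^sup>2 * M0 * (real n / (C * D))\<^sup>2)" .
  qed
qed

end
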